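(* Let $(V,c)$ be a braided vector space (i.e. $c\in GL(V\otimes V)$ satisfies $(c\otimes \mathrm{Id})(\mathrm{Id}\otimes c)(c\otimes \mathrm{Id})=(\mathrm{Id}\otimes c)(c\otimes \mathrm{Id})(\mathrm{Id}\otimes c)$) which is of left group-type (resp. right group-type) with respect to an ordered basis $[x_1,\ldots,x_m]$ of $V$, and define $S\in GL(V\otimes V)$ by $S(x_i\otimes x_j)=x_j\otimes x_i$. Then for every $n\ge 2$ the assignment $\sigma_i\mapsto \mathrm{Id}_V^{\otimes i-1}\otimes c\otimes \mathrm{Id}_V^{\otimes n-i-1}$, $s_i\mapsto \mathrm{Id}_V^{\otimes i-1}\otimes S\otimes \mathrm{Id}_V^{\otimes n-i-1}$ ($1\le i\le n-1$) defines a representation of $OLB_n$ (resp. of $LB_n$) on $V^{\otimes n}$; that is, $(V,c,S)$ is a loop braided vector space.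
   Context: $(V,c)$ is of left group-type w.r.t. $[x_1,\ldots,x_m]$ if there are $g_i\in GL(V)$ with $c(x_i\otimes z)=g_i(z)\otimes x_i$ for all $i$, $z\in V$; of right group-type if there are $g_j\in GL(V)$ with $c(z\otimes x_j)=x_j\otimes g_j(z)$ for all $j$, $z\in V$. The loop braid group $LB_n$ is the group generated by $\sigma_i,s_i$ ($1\le i\le n-1$) subject to: $\sigma_i\sigma_{i+1}\sigma_i=\sigma_{i+1}\sigma_i\sigma_{i+1}$; $\sigma_i\sigma_j=\sigma_j\sigma_i$ for $|i-j|>1$; $s_is_{i+1}s_i=s_{i+1}s_is_{i+1}$; $s_is_j=s_js_i$ for $|i-j|>1$; $s_i^2=1$; $\sigma_is_j=s_j\sigma_i$ for $|i-j|>1$; (L1) $s_is_{i+1}\sigma_i=\sigma_{i+1}s_is_{i+1}$; (L2) $\sigma_i\sigma_{i+1}s_i=s_{i+1}\sigma_i\sigma_{i+1}$. The group $OLB_n$ has the same generators and relations except that (L2) is replaced by (L3) $s_i\sigma_{i+1}\sigma_i=\sigma_{i+1}\sigma_is_{i+1}$. A triple $(V,c,S)$ with $S\in GL(V\otimes V)$ is called a loop braided vector space if the local assignment in the claim defines a representation of $LB_n$ or $OLB_n$. *)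

theory Defs
  imports Main
begin

(* Coordinates: V has ordered basis x_b (b :: 'b, 'b finite), so V = ('b => 'k),
   V (x) V = ('b * 'b => 'k), and V^{(x) n} = functions on words of length n
   (coordinate of x_{w_1} (x) ... (x) x_{w_n}), extended by 0 on other words. *)

definition basis_vec :: "'b \<Rightarrow> ('b \<Rightarrow> 'k::field)" where
  "basis_vec i = (\<lambda>j. if j = i then 1 else 0)"

definition tens :: "('b \<Rightarrow> 'k::field) \<Rightarrow> ('b \<Rightarrow> 'k) \<Rightarrow> ('b \<times> 'b \<Rightarrow> 'k)" where
  "tens u v = (\<lambda>(a, b). u a * v b)"

definition is_lin :: "(('a \<Rightarrow> 'k::field) \<Rightarrow> ('c \<Rightarrow> 'k)) \<Rightarrow> bool" where
  "is_lin f \<longleftrightarrow> (\<forall>u v. f (\<lambda>x. u x + v x) = (\<lambda>y. f u y + f v y))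
               \<and> (\<forall>r u. f (\<lambda>x. r * u x) = (\<lambda>y. r * f u y))"

definition is_GL :: "(('a \<Rightarrow> 'k::field) \<Rightarrow> ('a \<Rightarrow> 'k)) \<Rightarrow> bool" where
  "is_GL f \<longleftrightarrow> is_lin f \<and> bij f"

definition flip :: "('b \<times> 'b \<Rightarrow> 'k::field) \<Rightarrow> ('b \<times> 'b \<Rightarrow> 'k)" where
  "flip v = (\<lambda>(a, b). v (b, a))"

definition tpow :: "nat \<Rightarrow> ('b list \<Rightarrow> 'k::field) set" where
  "tpow n = {v. \<forall>w. length w \<noteq> n \<longrightarrow> v w = 0}"

(* ext n i f = Id^{(x) i} (x) f (x) Id^{(x) n-i-2} on V^{(x) n}, f acting on positions i, i+1
   (0-based) *)
definition ext :: "nat \<Rightarrow> nat \<Rightarrow> (('b::finite \<times> 'b \<Rightarrow> 'k::field) \<Rightarrow> ('b \<times> 'b \<Rightarrow> 'k))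
                   \<Rightarrow> ('b list \<Rightarrow> 'k) \<Rightarrow> ('b list \<Rightarrow> 'k)" where
  "ext n i f v w =
     (if length w = n \<and> Suc i < n then
        (\<Sum>a\<in>UNIV. \<Sum>b\<in>UNIV. f (tens (basis_vec a) (basis_vec b)) (w ! i, w ! Suc i)
                                  * v (w[i := a, Suc i := b]))
      else 0)"

definition braided :: "(('b::finite \<times> 'b \<Rightarrow> 'k::field) \<Rightarrow> ('b \<times> 'b \<Rightarrow> 'k)) \<Rightarrow> bool" where
  "braided c \<longleftrightarrow> is_GL c \<and>
     (\<forall>v\<in>tpow 3. ext 3 0 c (ext 3 1 c (ext 3 0 c v)) = ext 3 1 c (ext 3 0 c (ext 3 1 c v)))"

definition left_group_type :: "(('b::finite \<times> 'b \<Rightarrow> 'k::field) \<Rightarrow> ('b \<times> 'b \<Rightarrow> 'k)) \<Rightarrow> bool" where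
  "left_group_type c \<longleftrightarrow> (\<exists>g. (\<forall>i. is_GL (g i)) \<and>
     (\<forall>i z. c (tens (basis_vec i) z) = tens (g i z) (basis_vec i)))"

definition right_group_type :: "(('b::finite \<times> 'b \<Rightarrow> 'k::field) \<Rightarrow> ('b \<times> 'b \<Rightarrow> 'k)) \<Rightarrow> bool" where
  "right_group_type c \<longleftrightarrow> (\<exists>g. (\<forall>j. is_GL (g j)) \<and>
     (\<forall>j z. c (tens z (basis_vec j)) = tens (basis_vec j) (g j z)))"

definition op_eq :: "nat \<Rightarrow> (('b list \<Rightarrow> 'k::field) \<Rightarrow> ('b list \<Rightarrow> 'k))
                      \<Rightarrow> (('b list \<Rightarrow> 'k) \<Rightarrow> ('b list \<Rightarrow> 'k)) \<Rightarrow> bool" where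
  "op_eq n A B \<longleftrightarrow> (\<forall>v\<in>tpow n. A v = B v)"

(* the images of the generators sigma_i, s_i (1 <= i <= n-1) are invertible linear operators
   on V^{(x) n} satisfying the relations common to LB_n and OLB_n, plus (L1) *)
definition common_rels :: "nat \<Rightarrow> (nat \<Rightarrow> ('b list \<Rightarrow> 'k::field) \<Rightarrow> ('b list \<Rightarrow> 'k))
                           \<Rightarrow> (nat \<Rightarrow> ('b list \<Rightarrow> 'k) \<Rightarrow> ('b list \<Rightarrow> 'k)) \<Rightarrow> bool" where
  "common_rels n \<sigma> s \<longleftrightarrow>
     (\<forall>i. 1 \<le> i \<and> i \<le> n - 1 \<longrightarrow>
        (\<forall>u v. u \<in> tpow n \<longrightarrow> v \<in> tpow n \<longrightarrow> \<sigma> i (\<lambda>x. u x + v x) = (\<lambda>y. \<sigma> i u y + \<sigma> i v y)) \<and>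
        (\<forall>r u. u \<in> tpow n \<longrightarrow> \<sigma> i (\<lambda>x. r * u x) = (\<lambda>y. r * \<sigma> i u y)) \<and>
        (\<forall>u v. u \<in> tpow n \<longrightarrow> v \<in> tpow n \<longrightarrow> s i (\<lambda>x. u x + v x) = (\<lambda>y. s i u y + s i v y)) \<and>
        (\<forall>r u. u \<in> tpow n \<longrightarrow> s i (\<lambda>x. r * u x) = (\<lambda>y. r * s i u y)) \<and>
        bij_betw (\<sigma> i) (tpow n) (tpow n) \<and> bij_betw (s i) (tpow n) (tpow n)) \<and>
     (\<forall>i. 1 \<le> i \<and> i + 1 \<le> n - 1 \<longrightarrow>
        op_eq n (\<sigma> i \<circ> \<sigma> (i+1) \<circ> \<sigma> i) (\<sigma> (i+1) \<circ> \<sigma> i \<circ> \<sigma> (i+1)) \<and>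
        op_eq n (s i \<circ> s (i+1) \<circ> s i) (s (i+1) \<circ> s i \<circ> s (i+1)) \<and>
        op_eq n (s i \<circ> s (i+1) \<circ> \<sigma> i) (\<sigma> (i+1) \<circ> s i \<circ> s (i+1))) \<and>
     (\<forall>i j. 1 \<le> i \<and> i \<le> n - 1 \<and> 1 \<le> j \<and> j \<le> n - 1 \<and> (i + 1 < j \<or> j + 1 < i) \<longrightarrow>
        op_eq n (\<sigma> i \<circ> \<sigma> j) (\<sigma> j \<circ> \<sigma> i) \<and>
        op_eq n (s i \<circ> s j) (s j \<circ> s i) \<and>
        op_eq n (\<sigma> i \<circ> s j) (s j \<circ> \<sigma> i)) \<and>
     (\<forall>i. 1 \<le> i \<and> i \<le> n - 1 \<longrightarrow> op_eq n (s i \<circ> s i) id)"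

definition LB_rep :: "nat \<Rightarrow> (nat \<Rightarrow> ('b list \<Rightarrow> 'k::field) \<Rightarrow> ('b list \<Rightarrow> 'k))
                       \<Rightarrow> (nat \<Rightarrow> ('b list \<Rightarrow> 'k) \<Rightarrow> ('b list \<Rightarrow> 'k)) \<Rightarrow> bool" where
  "LB_rep n \<sigma> s \<longleftrightarrow> common_rels n \<sigma> s \<and>
     (\<forall>i. 1 \<le> i \<and> i + 1 \<le> n - 1 \<longrightarrow>
        op_eq n (\<sigma> i \<circ> \<sigma> (i+1) \<circ> s i) (s (i+1) \<circ> \<sigma> i \<circ> \<sigma> (i+1)))"

definition OLB_rep :: "nat \<Rightarrow> (nat \<Rightarrow> ('b list \<Rightarrow> 'k::field) \<Rightarrow> ('b list \<Rightarrow> 'k))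
                       \<Rightarrow> (nat \<Rightarrow> ('b list \<Rightarrow> 'k) \<Rightarrow> ('b list \<Rightarrow> 'k)) \<Rightarrow> bool" where
  "OLB_rep n \<sigma> s \<longleftrightarrow> common_rels n \<sigma> s \<and>
     (\<forall>i. 1 \<le> i \<and> i + 1 \<le> n - 1 \<longrightarrow>
        op_eq n (s i \<circ> \<sigma> (i+1) \<circ> \<sigma> i) (\<sigma> (i+1) \<circ> \<sigma> i \<circ> s (i+1)))"

end

theory Submission
  imports Defs
begin


lemma lin_zero: assumes "is_lin f" shows "f (\<lambda>x. 0) = (\<lambda>y. 0)"
proof -
  have "f (\<lambda>x. 0 * u x) = (\<lambda>y. 0 * f u y)" for u using assms unfolding is_lin_def by blast
  thus ?thesis by simp
qed

lemma lin_sum: assumes "is_lin f" "finite A"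
  shows "f (\<lambda>x. \<Sum>a\<in>A. h a x) = (\<lambda>y. \<Sum>a\<in>A. f (h a) y)"
  using assms(2)
proof induct
  case empty show ?case using lin_zero[OF assms(1)] by simp
next
  case (insert a A)
  have "f (\<lambda>x. \<Sum>b\<in>insert a A. h b x) = f (\<lambda>x. h a x + (\<Sum>b\<in>A. h b x))" using insert by simp
  also have "\<dots> = (\<lambda>y. f (\<lambda>x. h a x) y + f (\<lambda>x. \<Sum>b\<in>A. h b x) y)"
  proof -
    have add: "\<And>u v. f (\<lambda>x. u x + v x) = (\<lambda>y. f u y + f v y)" using assms(1) unfolding is_lin_def by blast
    show ?thesis using add[of "h a" "\<lambda>x. \<Sum>b\<in>A. h b x"] by simp
  qed
  also have "\<dots> = (\<lambda>y. \<Sum>b\<in>insert a A. f (h b) y)" using insert by simp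
  finally show ?case .
qed

lemma lin_expand:
  fixes f :: "('a::finite \<Rightarrow> 'k::field) \<Rightarrow> ('c \<Rightarrow> 'k)"
  assumes "is_lin f"
  shows "f u y = (\<Sum>a\<in>UNIV. u a * f (\<lambda>x. if x = a then 1 else 0) y)"
proof -
  have u: "u = (\<lambda>x. \<Sum>a\<in>UNIV. u a * (if x = a then 1 else 0))"
    by (rule ext) (simp add: if_distrib[of "(*) _"] cong: if_cong)
  have "f u = f (\<lambda>x. \<Sum>a\<in>UNIV. u a * (if x = a then 1 else 0))"
    by (rule arg_cong[where f=f]) (rule u)
  also have "\<dots> = (\<lambda>y. \<Sum>a\<in>UNIV. f (\<lambda>x. u a * (if x = a then 1 else 0)) y)"
    by (rule lin_sum[OF assms]) simp
  also have "\<dots> = (\<lambda>y. \<Sum>a\<in>UNIV. u a * f (\<lambda>x. if x = a then 1 else 0) y)"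
    using assms unfolding is_lin_def by simp
  finally show ?thesis by simp
qed

lemma lin_commute:
  fixes f :: "('a::finite \<Rightarrow> 'k::field) \<Rightarrow> ('c \<Rightarrow> 'k)"
    and g :: "('b::finite \<Rightarrow> 'k) \<Rightarrow> ('d \<Rightarrow> 'k)"
  assumes "is_lin f" "is_lin g"
  shows "f (\<lambda>p. g (\<lambda>q. F p q) y) x = g (\<lambda>q. f (\<lambda>p. F p q) x) y"
proof -
  let ?df = "\<lambda>p. f (\<lambda>z. if z = p then 1 else 0) x"
  let ?dg = "\<lambda>q. g (\<lambda>z. if z = q then 1 else 0) y"
  have "f (\<lambda>p. g (\<lambda>q. F p q) y) x = (\<Sum>p\<in>UNIV. g (\<lambda>q. F p q) y * ?df p)"
    by (rule lin_expand[OF assms(1)])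
  also have "\<dots> = (\<Sum>p\<in>UNIV. (\<Sum>q\<in>UNIV. F p q * ?dg q) * ?df p)"
    by (subst lin_expand[OF assms(2)]) (rule refl)
  also have "\<dots> = (\<Sum>q\<in>UNIV. (\<Sum>p\<in>UNIV. F p q * ?df p) * ?dg q)"
    apply (simp add: sum_distrib_left sum_distrib_right)
    apply (subst sum.swap)
    apply (simp add: mult_ac)
    done
  also have "\<dots> = (\<Sum>q\<in>UNIV. f (\<lambda>p. F p q) x * ?dg q)"
    by (subst lin_expand[OF assms(1)]) (rule refl)
  also have "\<dots> = g (\<lambda>q. f (\<lambda>p. F p q) x) y"
    by (rule lin_expand[OF assms(2), symmetric])
  finally show ?thesis .
qed

lemma tens_bv: "tens (basis_vec a) (basis_vec b) = (\<lambda>x. if x = (a, b) then 1 else 0)"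
  by (auto simp: tens_def basis_vec_def)

lemma ext_fun:
  fixes f :: "('b::finite \<times> 'b \<Rightarrow> 'k::field) \<Rightarrow> ('b \<times> 'b \<Rightarrow> 'k)"
  assumes "is_lin f" "length w = n" "Suc i < n"
  shows "ext n i f v w = f (\<lambda>p. v (w[i := fst p, Suc i := snd p])) (w ! i, w ! Suc i)"
  apply (subst lin_expand[OF assms(1)])
  apply (simp add: ext_def assms tens_bv)
  apply (simp add: UNIV_Times_UNIV[symmetric] sum.cartesian_product mult.commute del: UNIV_Times_UNIV)
  apply (rule sum.cong; auto)
  done




lemma ext_zero: "length w \<noteq> n \<Longrightarrow> ext n i f v w = 0"
  by (simp add: ext_def)

lemma flip_lin: "is_lin flip"
  by (auto simp: is_lin_def flip_def fun_eq_iff)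

lemma ext_flip: assumes "length w = n" "Suc i < n"
  shows "ext n i flip v w = v (w[i := w ! Suc i, Suc i := w ! i])"
  using assms by (simp add: ext_fun flip_lin flip_def)

lemma ext_tpow: "ext n i f v \<in> tpow n"
  by (simp add: tpow_def ext_def)

lemma ext_add: "ext n i f (\<lambda>x. u x + v x) = (\<lambda>y. ext n i f u y + ext n i f v y)"
  by (auto simp: ext_def fun_eq_iff distrib_left sum.distrib)

lemma ext_smult: "ext n i f (\<lambda>x. r * u x) = (\<lambda>y. r * ext n i f u y)"
  by (auto simp: ext_def fun_eq_iff sum_distrib_left mult_ac)

lemma upd2_upd2: "Suc i < length w \<Longrightarrow> w[i := a, Suc i := b, i := c, Suc i := d] = w[i := c, Suc i := d]"
  by (rule nth_equalityI) (auto simp: nth_list_update)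

lemma ext_inv:
  assumes "is_lin f" "is_lin h" "\<And>u. h (f u) = u" "Suc i < n" "v \<in> tpow n"
  shows "ext n i h (ext n i f v) = v"
proof (rule ext)
  fix w
  show "ext n i h (ext n i f v) w = v w"
  proof (cases "length w = n")
    case True
    have "ext n i h (ext n i f v) w = h (\<lambda>p. ext n i f v (w[i := fst p, Suc i := snd p])) (w ! i, w ! Suc i)"
      using True assms by (simp add: ext_fun)
    also have "(\<lambda>p. ext n i f v (w[i := fst p, Suc i := snd p])) = f (\<lambda>q. v (w[i := fst q, Suc i := snd q]))"
      using True assms by (auto simp: ext_fun upd2_upd2 fun_eq_iff)
    finally show ?thesis using True assms by (simp add: list_update_id)
  next
    case False
    then show ?thesis using assms by (simp add: ext_zero tpow_def)
  qed
qed

lemma ext_bij: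
  assumes "is_lin f" "is_lin h" "\<And>u. h (f u) = u" "\<And>u. f (h u) = u" "Suc i < n"
  shows "bij_betw (ext n i f) (tpow n) (tpow n)"
  apply (rule bij_betw_byWitness[where f'="ext n i h"])
  using assms ext_inv[of f h] ext_inv[of h f] ext_tpow by auto

lemma GL_inv:
  assumes "is_GL f"
  shows "is_lin (inv f)" "\<And>u. inv f (f u) = u" "\<And>u. f (inv f u) = u"
proof -
  have b: "bij f" and l: "is_lin f" using assms by (auto simp: is_GL_def)
  show i1: "\<And>u. inv f (f u) = u" using b by (simp add: bij_is_inj)
  show i2: "\<And>u. f (inv f u) = u" using b by (simp add: bij_is_surj surj_f_inv_f)
  have "inv f (\<lambda>x. u x + v x) = (\<lambda>y. inv f u y + inv f v y)" for u v
  proof -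
    have "f (\<lambda>y. inv f u y + inv f v y) = (\<lambda>x. u x + v x)"
      using l i2 unfolding is_lin_def by simp
    then show ?thesis by (metis i1)
  qed
  moreover have "inv f (\<lambda>x. r * u x) = (\<lambda>y. r * inv f u y)" for r u
  proof -
    have "f (\<lambda>y. r * inv f u y) = (\<lambda>x. r * u x)"
      using l i2 unfolding is_lin_def by simp
    then show ?thesis by (metis i1)
  qed
  ultimately show "is_lin (inv f)" by (simp add: is_lin_def)
qed

lemma ext_far:
  assumes "is_lin f" "is_lin g" "Suc p < q" "Suc q < n"
  shows "ext n p f (ext n q g v) = ext n q g (ext n p f v)"
proof (rule ext)
  fix w
  show "ext n p f (ext n q g v) w = ext n q g (ext n p f v) w"
  proof (cases "length w = n")
    case True
    have eq: "w[p := a, Suc p := b, q := c, Suc q := d] = w[q := c, Suc q := d, p := a, Suc p := b]" for a b c d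
      using assms True by (intro nth_equalityI) (auto simp: nth_list_update)
    have L: "ext n p f (ext n q g v) w = f (\<lambda>x. g (\<lambda>y. v (w[p := fst x, Suc p := snd x, q := fst y, Suc q := snd y])) (w ! q, w ! Suc q)) (w ! p, w ! Suc p)"
      using True assms by (simp add: ext_fun)
    have R: "ext n q g (ext n p f v) w = g (\<lambda>y. f (\<lambda>x. v (w[q := fst y, Suc q := snd y, p := fst x, Suc p := snd x])) (w ! p, w ! Suc p)) (w ! q, w ! Suc q)"
      using True assms by (simp add: ext_fun)
    show ?thesis unfolding L R eq by (rule lin_commute[OF assms(1,2)])
  next
    case False then show ?thesis by (simp add: ext_zero)
  qed
qed




definition R3 :: "nat \<Rightarrow> 'b list \<Rightarrow> ('b list \<Rightarrow> 'k::field) \<Rightarrow> ('b list \<Rightarrow> 'k)" where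
  "R3 i w v = (\<lambda>u. if length u = 3 then v (w[i := u ! 0, Suc i := u ! 1, Suc (Suc i) := u ! 2]) else 0)"

lemma len3: "length u = 3 \<Longrightarrow> \<exists>x y z. u = [x, y, z]"
  by (auto simp: length_Suc_conv numeral_3_eq_3)

lemma R3_tpow: "R3 i w v \<in> tpow 3"
  by (simp add: R3_def tpow_def)

lemma R3_val: "length w = n \<Longrightarrow> Suc (Suc i) < n \<Longrightarrow> v w = R3 i w v [w ! i, w ! Suc i, w ! Suc (Suc i)]"
  by (simp add: R3_def)

lemma R3_ext0:
  fixes f :: "('b::finite \<times> 'b \<Rightarrow> 'k::field) \<Rightarrow> ('b \<times> 'b \<Rightarrow> 'k)"
  assumes "is_lin f" "length w = n" "Suc (Suc i) < n"
  shows "R3 i w (ext n i f v) = ext 3 0 f (R3 i w v)"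
proof (rule ext)
  fix u :: "'b list"
  show "R3 i w (ext n i f v) u = ext 3 0 f (R3 i w v) u"
  proof (cases "length u = 3")
    case True
    then obtain x y z where u: "u = [x, y, z]" using len3 by blast
    have eq: "w[i := x, Suc i := y, Suc (Suc i) := z, i := a, Suc i := b] = w[i := a, Suc i := b, Suc (Suc i) := z]" for a b
      using assms by (intro nth_equalityI) (auto simp: nth_list_update)
    show ?thesis using assms unfolding u by (simp add: R3_def ext_fun eq)
  next
    case False then show ?thesis by (simp add: R3_def ext_zero)
  qed
qed

lemma R3_ext1:
  fixes f :: "('b::finite \<times> 'b \<Rightarrow> 'k::field) \<Rightarrow> ('b \<times> 'b \<Rightarrow> 'k)"
  assumes "is_lin f" "length w = n" "Suc (Suc i) < n"
  shows "R3 i w (ext n (Suc i) f v) = ext 3 1 f (R3 i w v)"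
proof (rule ext)
  fix u :: "'b list"
  show "R3 i w (ext n (Suc i) f v) u = ext 3 1 f (R3 i w v) u"
  proof (cases "length u = 3")
    case True
    then obtain x y z where u: "u = [x, y, z]" using len3 by blast
    have eq: "w[i := x, Suc i := y, Suc (Suc i) := z, Suc i := a, Suc (Suc i) := b] = w[i := x, Suc i := a, Suc (Suc i) := b]" for a b
      using assms by (intro nth_equalityI) (auto simp: nth_list_update)
    show ?thesis using assms unfolding u by (simp add: R3_def ext_fun eq)
  next
    case False then show ?thesis by (simp add: R3_def ext_zero)
  qed
qed

lemma op_eq_triple:
  assumes H: "\<forall>v\<in>tpow 3. PA (PB (PC v)) = PD (PE (PF v))"
    and RA: "\<And>w v. length w = n \<Longrightarrow> R3 k w (A v) = PA (R3 k w v)"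
    and RB: "\<And>w v. length w = n \<Longrightarrow> R3 k w (B v) = PB (R3 k w v)"
    and RC: "\<And>w v. length w = n \<Longrightarrow> R3 k w (C v) = PC (R3 k w v)"
    and RD: "\<And>w v. length w = n \<Longrightarrow> R3 k w (D v) = PD (R3 k w v)"
    and RE: "\<And>w v. length w = n \<Longrightarrow> R3 k w (E v) = PE (R3 k w v)"
    and RF: "\<And>w v. length w = n \<Longrightarrow> R3 k w (F v) = PF (R3 k w v)"
    and zA: "\<And>w v. length w \<noteq> n \<Longrightarrow> A v w = 0"
    and zD: "\<And>w v. length w \<noteq> n \<Longrightarrow> D v w = 0"
    and k: "Suc (Suc k) < n"
  shows "op_eq n (A \<circ> B \<circ> C) (D \<circ> E \<circ> F)"
  unfolding op_eq_def
proof (intro ballI ext)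
  fix v w
  show "(A \<circ> B \<circ> C) v w = (D \<circ> E \<circ> F) v w"
  proof (cases "length w = n")
    case True
    have "(A \<circ> B \<circ> C) v w = R3 k w (A (B (C v))) [w ! k, w ! Suc k, w ! Suc (Suc k)]"
      using R3_val[OF True k, of "A (B (C v))"] by simp
    also have "\<dots> = PA (PB (PC (R3 k w v))) [w ! k, w ! Suc k, w ! Suc (Suc k)]"
      using True by (simp add: RA RB RC)
    also have "\<dots> = PD (PE (PF (R3 k w v))) [w ! k, w ! Suc k, w ! Suc (Suc k)]"
      using H R3_tpow by metis
    also have "\<dots> = R3 k w (D (E (F v))) [w ! k, w ! Suc k, w ! Suc (Suc k)]"
      using True by (simp add: RD RE RF)
    also have "\<dots> = (D \<circ> E \<circ> F) v w"
      using R3_val[OF True k, of "D (E (F v))"] by simp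
    finally show ?thesis .
  next
    case False then show ?thesis by (simp add: zA zD)
  qed
qed

lemma ext3_0: "is_lin f \<Longrightarrow> ext 3 0 f v [x, y, z] = f (\<lambda>p. v [fst p, snd p, z]) (x, y)"
  by (simp add: ext_fun)

lemma ext3_1': "is_lin f \<Longrightarrow> ext 3 (Suc 0) f v [x, y, z] = f (\<lambda>p. v [x, fst p, snd p]) (y, z)"
  by (simp add: ext_fun)

lemma ext3_1: "is_lin f \<Longrightarrow> ext 3 1 f v [x, y, z] = f (\<lambda>p. v [x, fst p, snd p]) (y, z)"
  by (simp add: ext_fun)

lemma ext3_eqI: "(\<And>x y z. A [x, y, z] = B [x, y, z]) \<Longrightarrow> (\<And>u. length u \<noteq> 3 \<Longrightarrow> A u = B u) \<Longrightarrow> A = B"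
  by (rule ext) (metis len3)

lemma flip_app: "flip u (x, y) = u (y, x)"
  by (simp add: flip_def)

lemma L_ss: "\<forall>v\<in>tpow 3. ext 3 0 flip (ext 3 1 flip (ext 3 0 flip v)) = ext 3 1 flip (ext 3 0 flip (ext 3 1 flip v))"
  by (auto intro!: ext3_eqI simp: ext3_0 ext3_1 ext3_1' flip_lin flip_app ext_zero)

lemma L_1:
  assumes "is_lin c"
  shows "\<forall>v\<in>tpow 3. ext 3 0 flip (ext 3 1 flip (ext 3 0 c v)) = ext 3 1 c (ext 3 0 flip (ext 3 1 flip v))"
  using assms by (auto intro!: ext3_eqI simp: ext3_0 ext3_1 ext3_1' flip_lin flip_app ext_zero)




lemma sum_delta2:
  fixes F :: "'a::finite \<Rightarrow> 'b::finite \<Rightarrow> 'k::comm_monoid_add"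
  shows "(\<Sum>a\<in>UNIV. \<Sum>b\<in>UNIV. (if y = a then F a b else 0)) = (\<Sum>b\<in>UNIV. F y b)"
proof -
  have "(\<Sum>b\<in>UNIV. (if y = a then F a b else 0)) = (if y = a then \<Sum>b\<in>UNIV. F a b else 0)" for a
    by (cases "y = a") simp_all
  then show ?thesis by simp
qed

lemma left_form:
  fixes c :: "('b::finite \<times> 'b \<Rightarrow> 'k::field) \<Rightarrow> ('b \<times> 'b \<Rightarrow> 'k)"
  assumes lc: "is_lin c" and lg: "\<And>i. is_lin (g i)"
    and H: "\<And>i z. c (tens (basis_vec i) z) = tens (g i z) (basis_vec i)"
  shows "c u (x, y) = g y (\<lambda>b. u (y, b)) x"
proof -
  have "c u (x, y) = (\<Sum>p\<in>UNIV. u p * c (\<lambda>z. if z = p then 1 else 0) (x, y))"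
    by (rule lin_expand[OF lc])
  also have "\<dots> = (\<Sum>p\<in>UNIV. u p * (g (fst p) (basis_vec (snd p)) x * (if y = fst p then 1 else 0)))"
  proof (rule sum.cong)
    fix p :: "'b \<times> 'b"
    obtain a b where p: "p = (a, b)" by (cases p)
    show "u p * c (\<lambda>z. if z = p then 1 else 0) (x, y) = u p * (g (fst p) (basis_vec (snd p)) x * (if y = fst p then 1 else 0))"
      unfolding p tens_bv[symmetric] H by (simp add: tens_def basis_vec_def)
  qed simp
  also have "\<dots> = (\<Sum>a\<in>UNIV. \<Sum>b\<in>UNIV. u (a, b) * (g a (basis_vec b) x * (if y = a then 1 else 0)))"
    by (simp add: UNIV_Times_UNIV[symmetric] sum.cartesian_product split_def del: UNIV_Times_UNIV)
  also have "\<dots> = (\<Sum>a\<in>UNIV. \<Sum>b\<in>UNIV. if y = a then u (a, b) * g a (basis_vec b) x else 0)"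
    by (simp add: if_distrib[of "(*) _"] cong: if_cong)
  also have "\<dots> = (\<Sum>b\<in>UNIV. u (y, b) * g y (basis_vec b) x)"
    by (rule sum_delta2)
  also have "\<dots> = g y (\<lambda>b. u (y, b)) x"
    unfolding basis_vec_def by (rule lin_expand[OF lg, symmetric])
  finally show ?thesis .
qed

lemma right_form:
  fixes c :: "('b::finite \<times> 'b \<Rightarrow> 'k::field) \<Rightarrow> ('b \<times> 'b \<Rightarrow> 'k)"
  assumes lc: "is_lin c" and lg: "\<And>i. is_lin (g i)"
    and H: "\<And>j z. c (tens z (basis_vec j)) = tens (basis_vec j) (g j z)"
  shows "c u (x, y) = g x (\<lambda>a. u (a, x)) y"
proof -
  have "c u (x, y) = (\<Sum>p\<in>UNIV. u p * c (\<lambda>z. if z = p then 1 else 0) (x, y))"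
    by (rule lin_expand[OF lc])
  also have "\<dots> = (\<Sum>p\<in>UNIV. u p * ((if x = snd p then 1 else 0) * g (snd p) (basis_vec (fst p)) y))"
  proof (rule sum.cong)
    fix p :: "'b \<times> 'b"
    obtain a b where p: "p = (a, b)" by (cases p)
    show "u p * c (\<lambda>z. if z = p then 1 else 0) (x, y) = u p * ((if x = snd p then 1 else 0) * g (snd p) (basis_vec (fst p)) y)"
      unfolding p tens_bv[symmetric] H by (simp add: tens_def basis_vec_def)
  qed simp
  also have "\<dots> = (\<Sum>a\<in>UNIV. \<Sum>b\<in>UNIV. u (a, b) * ((if x = b then 1 else 0) * g b (basis_vec a) y))"
    by (simp add: UNIV_Times_UNIV[symmetric] sum.cartesian_product split_def del: UNIV_Times_UNIV)
  also have "\<dots> = (\<Sum>a\<in>UNIV. \<Sum>b\<in>UNIV. if x = b then u (a, b) * g b (basis_vec a) y else 0)"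
    by (intro sum.cong refl) simp
  also have "\<dots> = (\<Sum>a\<in>UNIV. u (a, x) * g x (basis_vec a) y)"
    by simp
  also have "\<dots> = g x (\<lambda>a. u (a, x)) y"
    unfolding basis_vec_def by (rule lin_expand[OF lg, symmetric])
  finally show ?thesis .
qed

lemma L_3:
  fixes c :: "('b::finite \<times> 'b \<Rightarrow> 'k::field) \<Rightarrow> ('b \<times> 'b \<Rightarrow> 'k)"
  assumes lc: "is_lin c" and lg: "\<And>i. is_lin (g i)"
    and H: "\<And>i z. c (tens (basis_vec i) z) = tens (g i z) (basis_vec i)"
  shows "\<forall>v\<in>tpow 3. ext 3 0 flip (ext 3 1 c (ext 3 0 c v)) = ext 3 1 c (ext 3 0 c (ext 3 1 flip v))"
proof (intro ballI ext3_eqI)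
  fix v :: "'b list \<Rightarrow> 'k" and x y z
  have "ext 3 0 flip (ext 3 1 c (ext 3 0 c v)) [x, y, z] = g z (\<lambda>b. g z (\<lambda>q. v [z, q, b]) y) x"
    by (simp add: ext3_0 ext3_1 ext3_1' flip_lin flip_app lc left_form[OF lc lg H])
  also have "\<dots> = g z (\<lambda>q. g z (\<lambda>b. v [z, q, b]) x) y"
    by (rule lin_commute[OF lg lg])
  also have "\<dots> = ext 3 1 c (ext 3 0 c (ext 3 1 flip v)) [x, y, z]"
    by (simp add: ext3_0 ext3_1 ext3_1' flip_lin flip_app lc left_form[OF lc lg H])
  finally show "ext 3 0 flip (ext 3 1 c (ext 3 0 c v)) [x, y, z] = ext 3 1 c (ext 3 0 c (ext 3 1 flip v)) [x, y, z]" .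
qed (simp add: ext_zero)

lemma L_2:
  fixes c :: "('b::finite \<times> 'b \<Rightarrow> 'k::field) \<Rightarrow> ('b \<times> 'b \<Rightarrow> 'k)"
  assumes lc: "is_lin c" and lg: "\<And>i. is_lin (g i)"
    and H: "\<And>j z. c (tens z (basis_vec j)) = tens (basis_vec j) (g j z)"
  shows "\<forall>v\<in>tpow 3. ext 3 0 c (ext 3 1 c (ext 3 0 flip v)) = ext 3 1 flip (ext 3 0 c (ext 3 1 c v))"
proof (intro ballI ext3_eqI)
  fix v :: "'b list \<Rightarrow> 'k" and x y z
  have "ext 3 0 c (ext 3 1 c (ext 3 0 flip v)) [x, y, z] = g x (\<lambda>a. g x (\<lambda>b. v [b, a, x]) z) y"
    by (simp add: ext3_0 ext3_1 ext3_1' flip_lin flip_app lc right_form[OF lc lg H])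
  also have "\<dots> = g x (\<lambda>b. g x (\<lambda>a. v [b, a, x]) y) z"
    by (rule lin_commute[OF lg lg])
  also have "\<dots> = ext 3 1 flip (ext 3 0 c (ext 3 1 c v)) [x, y, z]"
    by (simp add: ext3_0 ext3_1 ext3_1' flip_lin flip_app lc right_form[OF lc lg H])
  finally show "ext 3 0 c (ext 3 1 c (ext 3 0 flip v)) [x, y, z] = ext 3 1 flip (ext 3 0 c (ext 3 1 c v)) [x, y, z]" .
qed (simp add: ext_zero)




lemma triple:
  fixes f1 f2 f3 g1 g2 g3 :: "('b::finite \<times> 'b \<Rightarrow> 'k::field) \<Rightarrow> ('b \<times> 'b \<Rightarrow> 'k)"
  assumes l: "is_lin f1" "is_lin f2" "is_lin f3" "is_lin g1" "is_lin g2" "is_lin g3"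
    and H: "\<forall>v\<in>tpow 3. ext 3 (j1 - k) f1 (ext 3 (j2 - k) f2 (ext 3 (j3 - k) f3 v))
                      = ext 3 (l1 - k) g1 (ext 3 (l2 - k) g2 (ext 3 (l3 - k) g3 v))"
    and j: "j1 \<in> {k, Suc k}" "j2 \<in> {k, Suc k}" "j3 \<in> {k, Suc k}"
           "l1 \<in> {k, Suc k}" "l2 \<in> {k, Suc k}" "l3 \<in> {k, Suc k}"
    and k: "Suc (Suc k) < n"
  shows "op_eq n (ext n j1 f1 \<circ> ext n j2 f2 \<circ> ext n j3 f3) (ext n l1 g1 \<circ> ext n l2 g2 \<circ> ext n l3 g3)"
proof -
  have R: "R3 k w (ext n j f v) = ext 3 (j - k) f (R3 k w v)"
    if "length w = n" "j \<in> {k, Suc k}" "is_lin f" for w v j and f :: "('b \<times> 'b \<Rightarrow> 'k) \<Rightarrow> ('b \<times> 'b \<Rightarrow> 'k)"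
    using that k R3_ext0[of f w n k v] R3_ext1[of f w n k v] by auto
  show ?thesis
    apply (rule op_eq_triple[where k=k and PA="ext 3 (j1 - k) f1" and PB="ext 3 (j2 - k) f2"
          and PC="ext 3 (j3 - k) f3" and PD="ext 3 (l1 - k) g1" and PE="ext 3 (l2 - k) g2"
          and PF="ext 3 (l3 - k) g3"])
    apply (rule H)
    using l j k R by (simp_all add: ext_zero)
qed

lemma common:
  fixes c :: "('b::finite \<times> 'b \<Rightarrow> 'k::field) \<Rightarrow> ('b \<times> 'b \<Rightarrow> 'k)"
  assumes gl: "is_GL c"
    and br: "\<forall>v\<in>tpow 3. ext 3 0 c (ext 3 1 c (ext 3 0 c v)) = ext 3 1 c (ext 3 0 c (ext 3 1 c v))"
    and n: "n \<ge> 2"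
  shows "common_rels n (\<lambda>i. ext n (i - 1) c) (\<lambda>i. ext n (i - 1) flip)"
proof -
  have lc: "is_lin c" using gl by (simp add: is_GL_def)
  note ci = GL_inv[OF gl]
  have fl: "is_lin (flip :: ('b \<times> 'b \<Rightarrow> 'k) \<Rightarrow> ('b \<times> 'b \<Rightarrow> 'k))" by (rule flip_lin)
  have ff: "flip (flip u) = u" for u :: "'b \<times> 'b \<Rightarrow> 'k" by (simp add: flip_def)
  have P1: "(\<forall>u v. u \<in> tpow n \<longrightarrow> v \<in> tpow n \<longrightarrow> ext n (i - 1) c (\<lambda>x. u x + v x) = (\<lambda>y. ext n (i - 1) c u y + ext n (i - 1) c v y)) \<and>
        (\<forall>r u. u \<in> tpow n \<longrightarrow> ext n (i - 1) c (\<lambda>x. r * u x) = (\<lambda>y. r * ext n (i - 1) c u y)) \<and>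
        (\<forall>u v. u \<in> tpow n \<longrightarrow> v \<in> tpow n \<longrightarrow> ext n (i - 1) (flip :: ('b \<times> 'b \<Rightarrow> 'k) \<Rightarrow> ('b \<times> 'b \<Rightarrow> 'k)) (\<lambda>x. u x + v x) = (\<lambda>y. ext n (i - 1) (flip :: ('b \<times> 'b \<Rightarrow> 'k) \<Rightarrow> ('b \<times> 'b \<Rightarrow> 'k)) u y + ext n (i - 1) (flip :: ('b \<times> 'b \<Rightarrow> 'k) \<Rightarrow> ('b \<times> 'b \<Rightarrow> 'k)) v y)) \<and>
        (\<forall>r u. u \<in> tpow n \<longrightarrow> ext n (i - 1) (flip :: ('b \<times> 'b \<Rightarrow> 'k) \<Rightarrow> ('b \<times> 'b \<Rightarrow> 'k)) (\<lambda>x. r * u x) = (\<lambda>y. r * ext n (i - 1) (flip :: ('b \<times> 'b \<Rightarrow> 'k) \<Rightarrow> ('b \<times> 'b \<Rightarrow> 'k)) u y)) \<and>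
        bij_betw (ext n (i - 1) c) (tpow n) (tpow n) \<and> bij_betw (ext n (i - 1) (flip :: ('b \<times> 'b \<Rightarrow> 'k) \<Rightarrow> ('b \<times> 'b \<Rightarrow> 'k))) (tpow n) (tpow n)"
    if "1 \<le> i \<and> i \<le> n - 1" for i
  proof -
    have k1: "Suc (i - 1) < n" using that n by auto
    show ?thesis
      using ext_bij[OF lc ci(1) ci(2) ci(3) k1] ext_bij[OF fl fl ff ff k1]
      by (simp add: ext_add ext_smult del: One_nat_def)
  qed
  have P2: "op_eq n (ext n (i - 1) c \<circ> ext n (i + 1 - 1) c \<circ> ext n (i - 1) c) (ext n (i + 1 - 1) c \<circ> ext n (i - 1) c \<circ> ext n (i + 1 - 1) c) \<and>
        op_eq n (ext n (i - 1) (flip :: ('b \<times> 'b \<Rightarrow> 'k) \<Rightarrow> ('b \<times> 'b \<Rightarrow> 'k)) \<circ> ext n (i + 1 - 1) (flip :: ('b \<times> 'b \<Rightarrow> 'k) \<Rightarrow> ('b \<times> 'b \<Rightarrow> 'k)) \<circ> ext n (i - 1) (flip :: ('b \<times> 'b \<Rightarrow> 'k) \<Rightarrow> ('b \<times> 'b \<Rightarrow> 'k))) (ext n (i + 1 - 1) (flip :: ('b \<times> 'b \<Rightarrow> 'k) \<Rightarrow> ('b \<times> 'b \<Rightarrow> 'k)) \<circ> ext n (i - 1) (flip :: ('b \<times> 'b \<Rightarrow> 'k) \<Rightarrow> ('b \<times> 'b \<Rightarrow> 'k)) \<circ> ext n (i + 1 - 1) (flip :: ('b \<times> 'b \<Rightarrow>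 'k) \<Rightarrow> ('b \<times> 'b \<Rightarrow> 'k))) \<and>
        op_eq n (ext n (i - 1) (flip :: ('b \<times> 'b \<Rightarrow> 'k) \<Rightarrow> ('b \<times> 'b \<Rightarrow> 'k)) \<circ> ext n (i + 1 - 1) (flip :: ('b \<times> 'b \<Rightarrow> 'k) \<Rightarrow> ('b \<times> 'b \<Rightarrow> 'k)) \<circ> ext n (i - 1) c) (ext n (i + 1 - 1) c \<circ> ext n (i - 1) (flip :: ('b \<times> 'b \<Rightarrow> 'k) \<Rightarrow> ('b \<times> 'b \<Rightarrow> 'k)) \<circ> ext n (i + 1 - 1) (flip :: ('b \<times> 'b \<Rightarrow> 'k) \<Rightarrow> ('b \<times> 'b \<Rightarrow> 'k)))"
    if "1 \<le> i \<and> i + 1 \<le> n - 1" for i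
  proof -
    define k where "k = i - 1"
    have ik: "i = Suc k" using that by (simp add: k_def)
    have k: "Suc (Suc k) < n" using that ik n by auto
    show ?thesis unfolding ik
      using triple[OF lc lc lc lc lc lc _ _ _ _ _ _ _ k, of k "Suc k" k "Suc k" k "Suc k"] br
        triple[OF fl fl fl fl fl fl _ _ _ _ _ _ _ k, of k "Suc k" k "Suc k" k "Suc k"] L_ss
        triple[OF fl fl lc lc fl fl _ _ _ _ _ _ _ k, of k "Suc k" k "Suc k" k "Suc k"] L_1[OF lc]
      by simp
  qed
  have P3: "op_eq n (ext n (i - 1) c \<circ> ext n (j - 1) c) (ext n (j - 1) c \<circ> ext n (i - 1) c) \<and>
        op_eq n (ext n (i - 1) (flip :: ('b \<times> 'b \<Rightarrow> 'k) \<Rightarrow> ('b \<times> 'b \<Rightarrow> 'k)) \<circ> ext n (j - 1) (flip :: ('b \<times> 'b \<Rightarrow> 'k) \<Rightarrow> ('b \<times> 'b \<Rightarrow> 'k))) (ext n (j - 1) (flip :: ('b \<times> 'b \<Rightarrow> 'k) \<Rightarrow> ('b \<times> 'b \<Rightarrow> 'k)) \<circ> ext n (i - 1) (flip :: ('b \<times> 'b \<Rightarrow> 'k) \<Rightarrow> ('b \<times> 'b \<Rightarrow> 'k))) \<and>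
        op_eq n (ext n (i - 1) c \<circ> ext n (j - 1) (flip :: ('b \<times> 'b \<Rightarrow> 'k) \<Rightarrow> ('b \<times> 'b \<Rightarrow> 'k))) (ext n (j - 1) (flip :: ('b \<times> 'b \<Rightarrow> 'k) \<Rightarrow> ('b \<times> 'b \<Rightarrow> 'k)) \<circ> ext n (i - 1) c)"
    if "1 \<le> i \<and> i \<le> n - 1 \<and> 1 \<le> j \<and> j \<le> n - 1 \<and> (i + 1 < j \<or> j + 1 < i)" for i j
  proof (cases "i + 1 < j")
    case True
    have a: "Suc (i - 1) < j - 1" "Suc (j - 1) < n" using that True by auto
    show ?thesis using ext_far[OF lc lc a] ext_far[OF fl fl a] ext_far[OF lc fl a]
      by (simp add: op_eq_def)
  next
    case False
    have a: "Suc (j - 1) < i - 1" "Suc (i - 1) < n" using that False by auto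
    show ?thesis using ext_far[OF lc lc a] ext_far[OF fl fl a] ext_far[OF fl lc a]
      by (simp add: op_eq_def)
  qed
  have P4: "op_eq n (ext n (i - 1) (flip :: ('b \<times> 'b \<Rightarrow> 'k) \<Rightarrow> ('b \<times> 'b \<Rightarrow> 'k)) \<circ> ext n (i - 1) (flip :: ('b \<times> 'b \<Rightarrow> 'k) \<Rightarrow> ('b \<times> 'b \<Rightarrow> 'k))) id" if "1 \<le> i \<and> i \<le> n - 1" for i
  proof -
    have "Suc (i - 1) < n" using that n by auto
    then show ?thesis using ext_inv[OF fl fl ff] by (simp add: op_eq_def)
  qed
  show ?thesis unfolding common_rels_def using P1 P2 P3 P4 by simp
qed




theorem proposition3p3:
  fixes c :: "('b::finite \<times> 'b \<Rightarrow> 'k::field) \<Rightarrow> ('b \<times> 'b \<Rightarrow> 'k)"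
  assumes "braided c"
  shows "(left_group_type c \<longrightarrow>
            (\<forall>n\<ge>2. OLB_rep n (\<lambda>i. ext n (i - 1) c) (\<lambda>i. ext n (i - 1) flip)))
       \<and> (right_group_type c \<longrightarrow>
            (\<forall>n\<ge>2. LB_rep n (\<lambda>i. ext n (i - 1) c) (\<lambda>i. ext n (i - 1) flip)))"
proof -
  have gl: "is_GL c"
    and br: "\<forall>v\<in>tpow 3. ext 3 0 c (ext 3 1 c (ext 3 0 c v)) = ext 3 1 c (ext 3 0 c (ext 3 1 c v))"
    using assms by (simp_all add: braided_def)
  have lc: "is_lin c" using gl by (simp add: is_GL_def)
  have fl: "is_lin (flip :: ('b \<times> 'b \<Rightarrow> 'k) \<Rightarrow> ('b \<times> 'b \<Rightarrow> 'k))" by (rule flip_lin)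
  show ?thesis
  proof (intro conjI impI allI)
    fix n :: nat
    assume lt: "left_group_type c" and n: "2 \<le> n"
    obtain g where g: "\<forall>i. is_GL (g i)" and H: "\<forall>i z. c (tens (basis_vec i) z) = tens (g i z) (basis_vec i)"
      using lt unfolding left_group_type_def by blast
    have lg: "\<And>i. is_lin (g i)" using g by (simp add: is_GL_def)
    have H': "\<And>i z. c (tens (basis_vec i) z) = tens (g i z) (basis_vec i)" using H by blast
    show "OLB_rep n (\<lambda>i. ext n (i - 1) c) (\<lambda>i. ext n (i - 1) flip)"
      unfolding OLB_rep_def
    proof (intro conjI allI impI)
      show "common_rels n (\<lambda>i. ext n (i - 1) c) (\<lambda>i. ext n (i - 1) flip)"
        by (rule common[OF gl br n])
    next
      fix i assume i: "1 \<le> i \<and> i + 1 \<le> n - 1"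
      define k where "k = i - 1"
      have ik: "i = Suc k" using i by (simp add: k_def)
      have k: "Suc (Suc k) < n" using i ik n by auto
      show "op_eq n ((\<lambda>i. ext n (i - 1) flip) i \<circ> (\<lambda>i. ext n (i - 1) c) (i + 1) \<circ> (\<lambda>i. ext n (i - 1) c) i)
          ((\<lambda>i. ext n (i - 1) c) (i + 1) \<circ> (\<lambda>i. ext n (i - 1) c) i \<circ> (\<lambda>i. ext n (i - 1) flip) (i + 1))"
        unfolding ik
        using triple[OF fl lc lc lc lc fl _ _ _ _ _ _ _ k, of k "Suc k" k "Suc k" k "Suc k"] L_3[OF lc lg H']
        by simp
    qed
  next
    fix n :: nat
    assume rt: "right_group_type c" and n: "2 \<le> n"
    obtain g where g: "\<forall>i. is_GL (g i)" and H: "\<forall>j z. c (tens z (basis_vec j)) = tens (basis_vec j) (g j z)"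
      using rt unfolding right_group_type_def by blast
    have lg: "\<And>i. is_lin (g i)" using g by (simp add: is_GL_def)
    have H': "\<And>j z. c (tens z (basis_vec j)) = tens (basis_vec j) (g j z)" using H by blast
    show "LB_rep n (\<lambda>i. ext n (i - 1) c) (\<lambda>i. ext n (i - 1) flip)"
      unfolding LB_rep_def
    proof (intro conjI allI impI)
      show "common_rels n (\<lambda>i. ext n (i - 1) c) (\<lambda>i. ext n (i - 1) flip)"
        by (rule common[OF gl br n])
    next
      fix i assume i: "1 \<le> i \<and> i + 1 \<le> n - 1"
      define k where "k = i - 1"
      have ik: "i = Suc k" using i by (simp add: k_def)
      have k: "Suc (Suc k) < n" using i ik n by auto
      show "op_eq n ((\<lambda>i. ext n (i - 1) c) i \<circ> (\<lambda>i. ext n (i - 1) c) (i + 1) \<circ> (\<lambda>i. ext n (i - 1) flip) i)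
          ((\<lambda>i. ext n (i - 1) flip) (i + 1) \<circ> (\<lambda>i. ext n (i - 1) c) i \<circ> (\<lambda>i. ext n (i - 1) c) (i + 1))"
        unfolding ik
        using triple[OF lc lc fl fl lc lc _ _ _ _ _ _ _ k, of k "Suc k" k "Suc k" k "Suc k"] L_2[OF lc lg H']
        by simp
    qed
  qed
qed


end
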